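(* Let $m\geq 2$ be an integer, $q$ an odd prime power and $n=\frac{q^m+1}{2}$. Then the largest odd coset leader modulo $q^m+1$ is $\delta_1=n$ if $q^m\equiv 1\pmod 4$, and $\delta_1=\frac{(q-1)n}{q+1}$ if $q^m\equiv 3\pmod 4$. Moreover, $|C_{\delta_1}^{(q,q^m+1)}|=1$ if $q^m\equiv 1\pmod 4$ and $|C_{\delta_1}^{(q,q^m+1)}|=2$ if $q^m\equiv 3\pmod 4$.
   Context: $C_i^{(q,N)}=\{i,iq,iq^2,\ldots\}\bmod N$ denotes the $q$-cyclotomic coset of $i$ modulo $N$; its smallest element is its coset leader. An odd coset leader modulo $N$ is a coset leader that is an odd integer. *)

theory Defs
  imports "HOL-Number_Theory.Number_Theory"
begin

definition cyc_coset :: "nat \<Rightarrow> nat \<Rightarrow> nat \<Rightarrow> nat set" where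
  "cyc_coset q N i = {(i * q ^ j) mod N | j. True}"

definition coset_leader :: "nat \<Rightarrow> nat \<Rightarrow> nat \<Rightarrow> bool" where
  "coset_leader q N i \<longleftrightarrow> i < N \<and> i = Min (cyc_coset q N i)"

definition odd_coset_leaders :: "nat \<Rightarrow> nat \<Rightarrow> nat set" where
  "odd_coset_leaders q N = {i. coset_leader q N i \<and> odd i}"

definition prime_power :: "nat \<Rightarrow> bool" where
  "prime_power q \<longleftrightarrow> (\<exists>p k. prime p \<and> k \<ge> 1 \<and> q = p ^ k)"

end

theory Submission
  imports Defs
begin

lemma coset_sub: "N > 0 \<Longrightarrow> cyc_coset q N i \<subseteq> {..<N}"
  unfolding cyc_coset_def by auto

lemma coset_self: "i < N \<Longrightarrow> i \<in> cyc_coset q N i"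
  unfolding cyc_coset_def by (auto intro!: exI[of _ 0])

lemma coset_mem: "(i * q ^ j) mod N \<in> cyc_coset q N i"
  unfolding cyc_coset_def by auto

lemma not_leader:
  assumes "N > 0" "x \<in> cyc_coset q N i" "x < i"
  shows "\<not> coset_leader q N i"
proof
  assume "coset_leader q N i"
  then have "i = Min (cyc_coset q N i)" by (simp add: coset_leader_def)
  moreover have "Min (cyc_coset q N i) \<le> x"
    using assms coset_sub[of N q i] by (intro Min_le) (auto intro: finite_subset)
  ultimately show False using assms by simp
qed

lemma leader_intro:
  assumes "i < N" "\<And>j. i \<le> (i * q ^ j) mod N"
  shows "coset_leader q N i"
proof -
  have "Min (cyc_coset q N i) = i"
    using assms coset_sub[of N q i] coset_self[of i N q]
    by (intro Min_eqI) (auto intro: finite_subset simp: cyc_coset_def)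
  then show ?thesis using assms by (simp add: coset_leader_def)
qed

lemma odd_finite: "N > 0 \<Longrightarrow> finite (odd_coset_leaders q N)"
  unfolding odd_coset_leaders_def coset_leader_def
  by (rule finite_subset[of _ "{..<N}"]) auto

lemma negq:
  fixes N q r m :: nat
  assumes "N = q ^ m + 1" "r < N" "0 < r"
  shows "(r * q ^ m) mod N = N - r"
proof -
  have "r * q ^ m = (r - 1) * N + (N - r)"
  proof -
    obtain s where s: "r = Suc s" using assms by (cases r) auto
    have "s \<le> q ^ m" using assms s by simp
    then show ?thesis using assms s by (simp add: algebra_simps)
  qed
  then have "(r * q ^ m) mod N = ((N - r) + (r - 1) * N) mod N" by (simp only: add.commute)
  also have "\<dots> = (N - r) mod N" by (rule mod_mult_self1)
  also have "\<dots> = N - r" using assms by simp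
  finally show ?thesis .
qed

lemma big_not_leader:
  assumes "N = q ^ m + 1" "i < N" "N - i < i"
  shows "\<not> coset_leader q N i"
  using not_leader[of N "(i * q ^ m) mod N" q i] negq[OF assms(1,2)] coset_mem[of i q m N] assms
  by auto

lemma geo: "(1 + x) * (\<Sum>k<m. (-x)^k) = 1 - (-x)^m" for x :: int
  by (induction m) (auto simp: algebra_simps)

lemma par: "odd x \<Longrightarrow> even ((\<Sum>k<m. (-x)^k) - int m)" for x :: int
proof (induction m)
  case (Suc m)
  have "odd ((-x)^m)" using Suc by simp
  then show ?case using Suc by (simp add: algebra_simps)
qed simp

theorem lemma26:
  fixes q m n :: nat
  assumes "m \<ge> 2" and "prime_power q" and "odd q"
    and "n = (q ^ m + 1) div 2"
  shows "(q ^ m mod 4 = 1 \<longrightarrow>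
            Max (odd_coset_leaders q (q ^ m + 1)) = n \<and>
            card (cyc_coset q (q ^ m + 1) (Max (odd_coset_leaders q (q ^ m + 1)))) = 1)
       \<and> (q ^ m mod 4 = 3 \<longrightarrow>
            Max (odd_coset_leaders q (q ^ m + 1)) = (q - 1) * n div (q + 1) \<and>
            card (cyc_coset q (q ^ m + 1) (Max (odd_coset_leaders q (q ^ m + 1)))) = 2)"
proof -
  define N where "N = q ^ m + 1"
  have N0: "N > 0" by (simp add: N_def)
  have oddqm: "odd (q ^ m)" using assms(3) by simp
  have N2n: "N = 2 * n" using oddqm assms(4) unfolding N_def by presburger
  have fin: "finite (odd_coset_leaders q N)" using odd_finite N0 by blast
  have upper: "i \<le> n" if "i \<in> odd_coset_leaders q N" for i
  proof (rule ccontr)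
    assume "\<not> i \<le> n"
    moreover have "i < N" "coset_leader q N i" using that by (auto simp: odd_coset_leaders_def coset_leader_def)
    ultimately have "N - i < i" using N2n by simp
    then show False using big_not_leader[OF N_def, of i] \<open>i < N\<close> \<open>coset_leader q N i\<close> by blast
  qed
  have case1: "Max (odd_coset_leaders q N) = n \<and> card (cyc_coset q N (Max (odd_coset_leaders q N))) = 1"
    if h1: "q ^ m mod 4 = 1"
  proof -
    have oddn: "odd n" using h1 assms(4) by presburger
    have q1: "q \<ge> 1" using assms(3) by presburger
    have nq: "n * q = n + N * ((q - 1) div 2)"
    proof -
      have "q = 1 + 2 * ((q - 1) div 2)" using assms(3) by presburger
      then have "n * q = n * (1 + 2 * ((q - 1) div 2))" by simp
      also have "\<dots> = n + N * ((q - 1) div 2)" using N2n by (simp add: algebra_simps)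
      finally show ?thesis .
    qed
    have nlt: "n < N" using N2n N0 by simp
    have nfix: "(n * q ^ j) mod N = n" for j
    proof (induction j)
      case 0 then show ?case using nlt by simp
    next
      case (Suc j)
      have "(n * q ^ Suc j) mod N = ((n * q ^ j) mod N * q) mod N"
        by (simp only: power_Suc2 mult.assoc[symmetric] mod_mult_left_eq)
      also have "\<dots> = (n * q) mod N" using Suc by simp
      also have "\<dots> = n" using nq nlt by simp
      finally show ?case .
    qed
    have cos: "cyc_coset q N n = {n}" using nfix unfolding cyc_coset_def by auto
    have lead: "coset_leader q N n" using nlt nfix by (intro leader_intro) auto
    have mem: "n \<in> odd_coset_leaders q N" using lead oddn by (simp add: odd_coset_leaders_def)
    have "Max (odd_coset_leaders q N) = n" using fin mem upper by (intro Max_eqI) auto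
    then show ?thesis using cos by simp
  qed
  have case2: "Max (odd_coset_leaders q N) = (q - 1) * n div (q + 1) \<and>
      card (cyc_coset q N (Max (odd_coset_leaders q N))) = 2"
    if h3: "q ^ m mod 4 = 3"
  proof -
    have q3: "q mod 4 = 3"
    proof (rule ccontr)
      assume "q mod 4 \<noteq> 3"
      then have "q mod 4 = 1" using assms(3) by presburger
      then have "q ^ m mod 4 = 1" by (metis power_mod power_one mod_mod_trivial)
      then show False using h3 by simp
    qed
    have oddm: "odd m"
    proof
      assume "even m"
      then obtain k where k: "m = 2 * k" by blast
      have "q ^ 2 mod 4 = 1"
      proof -
        have "q ^ 2 mod 4 = (q mod 4) ^ 2 mod 4" by (simp add: power_mod)
        then show ?thesis using q3 by simp
      qed
      then have "(q ^ 2) ^ k mod 4 = 1" by (metis power_mod power_one mod_mod_trivial)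
      then show False using h3 k by (simp add: power_mult)
    qed
    define S where "S = (\<Sum>k<m. (- int q) ^ k)"
    have geoS: "(1 + int q) * S = 1 + int q ^ m"
      using geo[of "int q" m] oddm unfolding S_def by (simp add: power_minus_odd)
    have oddS: "odd S"
    proof -
      have "even (S - int m)" using par[of "int q" m] assms(3) unfolding S_def by simp
      moreover have "odd (int m)" using oddm by simp
      ultimately show ?thesis by presburger
    qed
    have Spos: "S > 0"
    proof -
      have "(1 + int q) * S > 0" using geoS by (simp add: add_pos_nonneg)
      then show ?thesis by (simp add: zero_less_mult_iff) 
    qed
    define M where "M = nat S"
    have NM: "N = (q + 1) * M"
    proof -
      have "int N = int ((q + 1) * M)" using geoS Spos unfolding N_def M_def by (simp add: algebra_simps)
      then show ?thesis by (simp only: of_nat_eq_iff)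
    qed
    have oddM: "odd M" using oddS Spos unfolding M_def by (simp add: even_nat_iff)
    define a where "a = (q - 1) div 2"
    have qa: "q = 2 * a + 1" and odda: "odd a" and a1: "a \<ge> 1" using q3 unfolding a_def by presburger+
    have NaM: "N = 2 * (a + 1) * M" using NM qa by simp
    have naM: "n = (a + 1) * M" using NaM N2n by simp
    define d where "d = a * M"
    have ddef: "(q - 1) * n div (q + 1) = d"
    proof -
      have "(q - 1) * n = (q + 1) * d" using qa naM unfolding d_def by (simp add: algebra_simps)
      then show ?thesis by (metis nonzero_mult_div_cancel_left add_gr_0 zero_less_one less_not_refl2)
    qed
    have M0: "M > 0" using oddM by (cases M) auto
    obtain c where c: "a = Suc c" using a1 by (cases a) auto
    have Nd: "N - d = (c + 3) * M" using NaM c unfolding d_def by (simp add: algebra_simps)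
    have "(c + 1) * M < (c + 3) * M" using M0 by (intro mult_strict_right_mono) auto
    then have dlt: "d < N - d" using Nd c unfolding d_def by simp
    have dN: "d < N" using dlt by simp
    have e1: "d * q = (N - d) + c * N"
      using Nd NaM c qa unfolding d_def by (simp add: algebra_simps)
    have e2: "(N - d) * q = d + (a + 1) * N"
      using Nd NaM c qa unfolding d_def by (simp add: algebra_simps)
    have m1: "(d * q) mod N = N - d"
    proof -
      have "(d * q) mod N = (N - d) mod N" using e1 by (simp only: mod_mult_self1)
      moreover have "d > 0" using M0 c unfolding d_def by simp
      ultimately show ?thesis using N0 dlt by simp
    qed
    have m2: "((N - d) * q) mod N = d"
    proof -
      have "((N - d) * q) mod N = d mod N" using e2 by (simp only: mod_mult_self1)
      then show ?thesis using dN by simp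
    qed
    have cosj: "(d * q ^ j) mod N = (if even j then d else N - d)" for j
    proof (induction j)
      case 0 then show ?case using dN by simp
    next
      case (Suc j)
      have "(d * q ^ Suc j) mod N = ((d * q ^ j) mod N * q) mod N"
        by (simp only: power_Suc2 mult.assoc[symmetric] mod_mult_left_eq)
      then show ?case using Suc m1 m2 by auto
    qed
    have cos: "cyc_coset q N d = {d, N - d}"
    proof
      show "cyc_coset q N d \<subseteq> {d, N - d}" using cosj unfolding cyc_coset_def by auto
      have "d \<in> cyc_coset q N d" using coset_mem[of d q 0 N] cosj[of 0] by simp
      moreover have "N - d \<in> cyc_coset q N d" using coset_mem[of d q 1 N] cosj[of 1] by simp
      ultimately show "{d, N - d} \<subseteq> cyc_coset q N d" by simp
    qed
    have card2: "card (cyc_coset q N d) = 2" using cos dlt by simp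
    have lead: "coset_leader q N d" using dN cosj dlt by (intro leader_intro) auto
    have oddd: "odd d" using odda oddM unfolding d_def by simp
    have mem: "d \<in> odd_coset_leaders q N" using lead oddd by (simp add: odd_coset_leaders_def)
    have upper2: "i \<le> d" if hi: "i \<in> odd_coset_leaders q N" for i
    proof (rule ccontr)
      assume "\<not> i \<le> d"
      then have id: "d < i" by simp
      have il: "coset_leader q N i" and oi: "odd i" using hi by (auto simp: odd_coset_leaders_def)
      have iN: "i < N" using il by (simp add: coset_leader_def)
      have "i \<le> n" using upper hi by simp
      moreover have "even n" using naM odda by simp
      ultimately have "i < n" using oi by (cases "i = n") auto
      define t where "t = n - i"
      have t0: "t > 0" and tM: "t < M" and it: "i + t = n"
        using \<open>i < n\<close> id naM unfolding t_def d_def by (auto simp: algebra_simps)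
      have nq: "n * q = n + a * N" using naM NaM qa by (simp add: algebra_simps)
      have iqt: "i * q + t * q = n + a * N" using it nq by (metis add_mult_distrib)
      have tq: "t < t * q" using t0 qa a1 by simp
      show False
      proof (cases "t * q \<le> n")
        case True
        have "i * q = (n - t * q) + a * N" using iqt True by simp
        then have "(i * q) mod N = (n - t * q) mod N" by (simp only: mod_mult_self1)
        also have "\<dots> = n - t * q" using N2n N0 by simp
        moreover have "n - t * q < i" using tq it True by linarith
        ultimately have "(i * q ^ 1) mod N < i" by simp
        then show False using not_leader[OF N0 coset_mem[of i q 1 N]] il by blast
      next
        case False
        have tqN: "t * q + t < N" using tM NM
          by (metis add.commute mult.commute mult_Suc_right mult_strict_right_mono add_gr_0 less_numeral_extra(1) plus_1_eq_Suc)
        have "i * q = (N + n - t * q) + c * N" using iqt False tqN c by (simp add: algebra_simps)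
        then have "(i * q) mod N = (N + n - t * q) mod N" by (simp only: mod_mult_self1)
        also have "\<dots> = N + n - t * q" using False tqN N0 by (intro mod_less) linarith
        finally have r: "(i * q) mod N = N + n - t * q" .
        have "(i * q ^ Suc m) mod N = ((i * q) mod N * q ^ m) mod N"
          by (simp only: power_Suc mult.assoc[symmetric] mod_mult_left_eq)
        also have "\<dots> = N - (N + n - t * q)" using negq[OF N_def, of "N + n - t * q"] r False tqN by simp
        finally have "(i * q ^ Suc m) mod N < i" using False tqN it N2n by simp
        then show False using not_leader[OF N0 coset_mem[of i q "Suc m" N]] il by blast
      qed
    qed
    have "Max (odd_coset_leaders q N) = d" using fin mem upper2 by (intro Max_eqI) auto
    then show ?thesis using card2 ddef by simp
  qed
  show ?thesis using case1 case2 unfolding N_def by blast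
qed

end
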